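(* Let $n\ge 2$, $\lambda=(\lambda_1,\dots,\lambda_n)\in\mathbb{R}^n$, and let $x$ be a vertex of the tweaked Gelfand–Tsetlin polytope $\widetilde{GT}(\lambda)$. Then every coordinate of $x$ lies in the additive subgroup $\Gamma(\lambda)=\mathbb{Z}\lambda_1+\dots+\mathbb{Z}\lambda_n\subseteq\mathbb{R}$.
   Context: Tweaked patterns: with $y_{1,j}:=\lambda_j$, a tweaked Gelfand–Tsetlin pattern of type $\lambda$ is a real vector with the $n^2-2$ coordinates $y_{i,j}$ ($2\le i\le n$, $i\le j\le n$), $z_{i,j}$ ($1\le i\le n-2$, $i\le j\le n-2$), $z^\uparrow_{i,n-1},z^\downarrow_{i,n-1}$ ($1\le i\le n-2$), $z_{n-1,n-1}$, satisfying: (T1) for $1\le i\le n-2$, $i\le j\le n-2$: $z_{i,j}\le y_{i,j}$, $z_{i,j}\ge y_{i,j+1}$, $z_{i,j}\ge y_{i+1,j+1}$, and $z_{i,j}\le y_{i+1,j}$ if $j\ge i+1$; (T2) for $1\le i\le n-2$: $\max\{y_{i,n},y_{i+1,n}\}\le z^\uparrow_{i,n-1}\le y_{i,n-1}$, $z^\uparrow_{i,n-1}\le y_{i,n-1}+y_{i,n}+y_{i+1,n}$, $\max\{y_{i,n},y_{i+1,n}\}\le z^\downarrow_{i,n-1}\le y_{i+1,n-1}$, $z^\downarrow_{i,n-1}\le y_{i+1,n-1}+y_{i,n}+y_{i+1,n}$, and $y_{i,n-1}-y_{i+1,n-1}=z^\uparrow_{i,n-1}-z^\downarrow_{i,n-1}$;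 (T3) $\max\{y_{n-1,n},y_{n,n}\}\le z_{n-1,n-1}\le y_{n-1,n-1}$ and $z_{n-1,n-1}\le y_{n-1,n-1}+y_{n-1,n}+y_{n,n}$. $\widetilde{GT}(\lambda)\subseteq\mathbb{R}^{n^2-2}$ is the set of all tweaked patterns of type $\lambda$ (a polyhedron; the claim concerns its vertices). *)

theory Defs
  imports Main "HOL-Analysis.Analysis"
begin

text \<open>Coordinates of a tweaked Gelfand-Tsetlin pattern:
  Y i j = y_{i,j} (2 \<le> i \<le> n, i \<le> j \<le> n),
  Z i j = z_{i,j} (1 \<le> i \<le> n-2, i \<le> j \<le> n-2),
  Zup i = z^up_{i,n-1}, Zdn i = z^down_{i,n-1} (1 \<le> i \<le> n-2),
  Zlast = z_{n-1,n-1}.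
  A point is a function from coordinates to reals that vanishes outside the
  n^2-2 valid coordinates, so the space of points is identified with R^(n^2-2).
  The type lambda is a function nat => real, only lam 1, ..., lam n matter.\<close>

datatype coord = Y nat nat | Z nat nat | Zup nat | Zdn nat | Zlast

definition valid_coord :: "nat \<Rightarrow> coord \<Rightarrow> bool" where
  "valid_coord n c = (case c of
      Y i j \<Rightarrow> 2 \<le> i \<and> i \<le> n \<and> i \<le> j \<and> j \<le> n
    | Z i j \<Rightarrow> 1 \<le> i \<and> i \<le> n - 2 \<and> i \<le> j \<and> j \<le> n - 2
    | Zup i \<Rightarrow> 1 \<le> i \<and> i \<le> n - 2
    | Zdn i \<Rightarrow> 1 \<le> i \<and> i \<le> n - 2
    | Zlast \<Rightarrow> True)"

definition yv :: "(nat \<Rightarrow> real) \<Rightarrow> (coord \<Rightarrow> real) \<Rightarrow> nat \<Rightarrow> nat \<Rightarrow> real" where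
  "yv lam x i j = (if i = 1 then lam j else x (Y i j))"

definition tweaked_GT :: "nat \<Rightarrow> (nat \<Rightarrow> real) \<Rightarrow> (coord \<Rightarrow> real) set" where
  "tweaked_GT n lam = {x.
     (\<forall>c. \<not> valid_coord n c \<longrightarrow> x c = 0) \<and>
     \<comment> \<open>(T1)\<close>
     (\<forall>i j. 1 \<le> i \<and> i \<le> n - 2 \<and> i \<le> j \<and> j \<le> n - 2 \<longrightarrow>
        x (Z i j) \<le> yv lam x i j \<and>
        x (Z i j) \<ge> yv lam x i (j + 1) \<and>
        x (Z i j) \<ge> yv lam x (i + 1) (j + 1) \<and>
        (j \<ge> i + 1 \<longrightarrow> x (Z i j) \<le> yv lam x (i + 1) j)) \<and>
     \<comment> \<open>(T2)\<close>
     (\<forall>i. 1 \<le> i \<and> i \<le> n - 2 \<longrightarrow>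
        max (yv lam x i n) (yv lam x (i + 1) n) \<le> x (Zup i) \<and>
        x (Zup i) \<le> yv lam x i (n - 1) \<and>
        x (Zup i) \<le> yv lam x i (n - 1) + yv lam x i n + yv lam x (i + 1) n \<and>
        max (yv lam x i n) (yv lam x (i + 1) n) \<le> x (Zdn i) \<and>
        x (Zdn i) \<le> yv lam x (i + 1) (n - 1) \<and>
        x (Zdn i) \<le> yv lam x (i + 1) (n - 1) + yv lam x i n + yv lam x (i + 1) n \<and>
        yv lam x i (n - 1) - yv lam x (i + 1) (n - 1) = x (Zup i) - x (Zdn i)) \<and>
     \<comment> \<open>(T3)\<close>
     max (yv lam x (n - 1) n) (yv lam x n n) \<le> x Zlast \<and>
     x Zlast \<le> yv lam x (n - 1) (n - 1) \<and>
     x Zlast \<le> yv lam x (n - 1) (n - 1) + yv lam x (n - 1) n + yv lam x n n}"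

definition is_vertex :: "(coord \<Rightarrow> real) set \<Rightarrow> (coord \<Rightarrow> real) \<Rightarrow> bool" where
  "is_vertex P x \<longleftrightarrow> x \<in> P \<and>
     \<not> (\<exists>a\<in>P. \<exists>b\<in>P. a \<noteq> b \<and> (\<exists>t::real. 0 < t \<and> t < 1 \<and>
           x = (\<lambda>c. (1 - t) * a c + t * b c)))"

definition Gamma_lat :: "nat \<Rightarrow> (nat \<Rightarrow> real) \<Rightarrow> real set" where
  "Gamma_lat n lam = {r. \<exists>k :: nat \<Rightarrow> int. r = (\<Sum>j=1..n. of_int (k j) * lam j)}"

end

theory Submission
  imports Defs
begin

definition gfun :: "real \<Rightarrow> real \<Rightarrow> real" where
  "gfun r u = (if u = r then 1 else if u = - r then -1 else 0)"

definition blockd :: "(real \<Rightarrow> real) \<Rightarrow> real \<Rightarrow> real \<Rightarrow> real \<Rightarrow> real \<Rightarrow> real \<Rightarrow> real \<Rightarrow> real" where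
  "blockd g s t a b p q = (if s = a then g a else if s = b then g b else if s = p then g p
     else if s = p + a + b then g p + g a + g b else if t = a then g a + g p - g q
     else if t = b then g b + g p - g q else g s)"

lemma gfun_odd: "r \<noteq> 0 \<Longrightarrow> gfun r (- u) = - gfun r u"
  unfolding gfun_def by auto

lemma gfun_bound: "\<bar>gfun r u\<bar> \<le> 1"
  unfolding gfun_def by auto

lemma blockd_bound: assumes "\<And>u. \<bar>g u\<bar> \<le> 1" shows "\<bar>blockd g s t a b p q\<bar> \<le> 3"
proof -
  have h: "\<bar>g u + g v + g w\<bar> \<le> 3" "\<bar>g u + g v - g w\<bar> \<le> 3" for u v w
    using assms[of u] assms[of v] assms[of w] by linarith+
  have h3: "\<bar>g u\<bar> \<le> 3" for u using assms[of u] by linarith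
  show ?thesis unfolding blockd_def using h h3 by (simp split: if_split)
qed

lemma blockd_tight:
  assumes odd: "\<And>u. g (- u) = - g u"
    and "a \<le> s" "b \<le> s" "s \<le> p" "s \<le> p + a + b" "a \<le> t" "b \<le> t" "t \<le> q" "t \<le> q + a + b"
    and eq: "p - q = s - t"
  shows "(s = a \<longrightarrow> blockd g s t a b p q = g a) \<and>
         (s = b \<longrightarrow> blockd g s t a b p q = g b) \<and>
         (s = p \<longrightarrow> blockd g s t a b p q = g p) \<and>
         (s = p + a + b \<longrightarrow> blockd g s t a b p q = g p + g a + g b) \<and>
         (t = a \<longrightarrow> blockd g s t a b p q - g p + g q = g a) \<and>
         (t = b \<longrightarrow> blockd g s t a b p q - g p + g q = g b) \<and>
         (t = q \<longrightarrow> blockd g s t a b p q - g p + g q = g q) \<and>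
         (t = q + a + b \<longrightarrow> blockd g s t a b p q - g p + g q = g q + g a + g b)"
proof -
  have o: "\<And>u v. u + v = 0 \<Longrightarrow> g u + g v = 0"
  proof -
    fix u v :: real assume "u + v = 0" then have "u = - v" by simp
    then show "g u + g v = 0" using odd[of v] by simp
  qed
  show ?thesis unfolding blockd_def using assms o[of p b] o[of p a] o[of a b] o[of q b] o[of q a]
    by (smt (verit))
qed

lemma Gamma_zero: "0 \<in> Gamma_lat n lam"
  unfolding Gamma_lat_def by (rule CollectI, rule exI[of _ "\<lambda>_. 0"]) simp

lemma Gamma_lam: assumes "1 \<le> j" "j \<le> n" shows "lam j \<in> Gamma_lat n lam"
proof -
  have "(\<Sum>i=1..n. of_int (if i = j then 1 else 0) * lam i) = (\<Sum>i=1..n. if i = j then lam i else 0)"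
    by (rule sum.cong) auto
  also have "\<dots> = lam j" using assms by (simp add: sum.delta)
  finally show ?thesis unfolding Gamma_lat_def by (intro CollectI exI[of _ "\<lambda>i. if i = j then 1 else 0"]) simp
qed

lemma Gamma_add: assumes "u \<in> Gamma_lat n lam" "v \<in> Gamma_lat n lam" shows "u + v \<in> Gamma_lat n lam"
proof -
  obtain k1 k2 where "u = (\<Sum>j=1..n. of_int (k1 j) * lam j)" "v = (\<Sum>j=1..n. of_int (k2 j) * lam j)"
    using assms unfolding Gamma_lat_def by auto
  then have "u + v = (\<Sum>j=1..n. of_int (k1 j + k2 j) * lam j)"
    by (simp add: sum.distrib distrib_right)
  then show ?thesis unfolding Gamma_lat_def by (intro CollectI exI[where x="\<lambda>j. k1 j + k2 j"]) (use \<open>u + v = _\<close> in simp)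
qed

lemma Gamma_neg: assumes "u \<in> Gamma_lat n lam" shows "- u \<in> Gamma_lat n lam"
proof -
  obtain k1 where "u = (\<Sum>j=1..n. of_int (k1 j) * lam j)"
    using assms unfolding Gamma_lat_def by auto
  then have "- u = (\<Sum>j=1..n. of_int (- k1 j) * lam j)"
    by (simp add: sum_negf)
  then show ?thesis unfolding Gamma_lat_def by (intro CollectI exI[where x="\<lambda>j. - k1 j"]) (use \<open>- u = _\<close> in simp)
qed

lemma Gamma_diff: "u \<in> Gamma_lat n lam \<Longrightarrow> v \<in> Gamma_lat n lam \<Longrightarrow> u - v \<in> Gamma_lat n lam"
  using Gamma_add[of u n lam "-v"] Gamma_neg[of v n lam] by simp

definition SL :: "real \<Rightarrow> real set \<Rightarrow> bool" where
  "SL \<delta> V \<longleftrightarrow> (\<forall>A\<in>V. \<forall>B\<in>V. \<forall>C\<in>V. \<forall>D\<in>V. B + C + D - A > 0 \<longrightarrow> B + C + D - A \<ge> \<delta>)"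

lemma pert3:
  assumes "SL \<delta> V" "\<delta> > 0" "A \<in> V" "B \<in> V" "C \<in> V" "D \<in> V" "A \<le> B + C + D"
    and "A = B + C + D \<Longrightarrow> dA = dB + dC + dD"
    and "\<bar>dA\<bar> \<le> 5" "\<bar>dB\<bar> \<le> 5" "\<bar>dC\<bar> \<le> 5" "\<bar>dD\<bar> \<le> 5" "\<bar>e\<bar> \<le> \<delta> / 40"
  shows "A + e * dA \<le> (B + e * dB) + (C + e * dC) + (D + e * dD)"
proof (cases "A = B + C + D")
  case True then show ?thesis using assms(8) by (simp add: algebra_simps)
next
  case False
  then have sl: "B + C + D - A \<ge> \<delta>" using assms unfolding SL_def by auto
  have "\<bar>dB + dC + dD - dA\<bar> \<le> 20" using assms by linarith
  then have "\<bar>e * (dB + dC + dD - dA)\<bar> \<le> (\<delta>/40) * 20"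
    unfolding abs_mult using assms(13) by (intro mult_mono) auto
  then have "e * (dB + dC + dD - dA) \<ge> - \<delta>/2" by linarith
  then have "e * dB + e * dC + e * dD - e * dA \<ge> - \<delta>/2" by (simp add: algebra_simps)
  then show ?thesis using sl assms(2) by linarith
qed

lemma pert2:
  assumes "SL \<delta> V" "\<delta> > 0" "A \<in> V" "B \<in> V" "0 \<in> V" "A \<le> B"
    and "A = B \<Longrightarrow> dA = dB"
    and "\<bar>dA\<bar> \<le> 5" "\<bar>dB\<bar> \<le> 5" "\<bar>e\<bar> \<le> \<delta> / 40"
  shows "A + e * dA \<le> B + e * dB"
proof -
  have "A + e * dA \<le> (B + e * dB) + (0 + e * 0) + (0 + e * 0)"
    by (rule pert3[OF assms(1,2,3,4,5,5)]) (use assms in auto)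
  then show ?thesis by simp
qed

lemma SL_exists: assumes "finite V" shows "\<exists>\<delta>>0. SL \<delta> V"
proof -
  define W where "W = (\<lambda>(A,B,C,D). B + C + D - A) ` (V \<times> V \<times> V \<times> V)"
  define P where "P = {w\<in>W. w > 0}"
  have fP: "finite P" unfolding P_def W_def using assms by auto
  show ?thesis
  proof (cases "P = {}")
    case True
    then have "SL 1 V" unfolding SL_def P_def W_def by force
    then show ?thesis by (intro exI[of _ 1]) simp
  next
    case False
    have pos: "Min P > 0" using fP False unfolding P_def by auto
    have "SL (Min P) V" unfolding SL_def
    proof (intro ballI impI)
      fix A B C D assume "A \<in> V" "B \<in> V" "C \<in> V" "D \<in> V" "B + C + D - A > 0"
      then have "B + C + D - A \<in> P" unfolding P_def W_def by force
      then show "B + C + D - A \<ge> Min P" using fP by auto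
    qed
    then show ?thesis using pos by blast
  qed
qed


lemma blockd_gamma:
  assumes "a \<in> Gamma_lat n lam" "b \<in> Gamma_lat n lam" "p \<in> Gamma_lat n lam" "q \<in> Gamma_lat n lam"
    and "s \<notin> Gamma_lat n lam" and "p - q = s - t"
  shows "blockd g s t a b p q = g s"
proof -
  have "p + a + b \<in> Gamma_lat n lam" using assms by (intro Gamma_add)
  moreover have "a + p - q \<in> Gamma_lat n lam" "b + p - q \<in> Gamma_lat n lam"
    using assms by (intro Gamma_diff Gamma_add; simp)+
  moreover have "t \<noteq> a"
  proof
    assume "t = a" then have "s = a + p - q" using assms(6) by simp
    then show False using \<open>a + p - q \<in> _\<close> assms(5) by simp
  qed
  moreover have "t \<noteq> b"
  proof
    assume "t = b" then have "s = b + p - q" using assms(6) by simp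
    then show False using \<open>b + p - q \<in> _\<close> assms(5) by simp
  qed
  ultimately have "s \<noteq> a" "s \<noteq> b" "s \<noteq> p" "s \<noteq> p + a + b" "t \<noteq> a" "t \<noteq> b"
    using assms by auto
  then show ?thesis unfolding blockd_def by simp
qed

lemma finite_valid: "finite {c. valid_coord n c}"
proof (rule finite_subset)
  show "{c. valid_coord n c} \<subseteq> (\<lambda>(i,j). Y i j) ` ({..n}\<times>{..n}) \<union> (\<lambda>(i,j). Z i j) ` ({..n}\<times>{..n})
      \<union> Zup ` {..n} \<union> Zdn ` {..n} \<union> {Zlast}"
  proof
    fix c assume "c \<in> {c. valid_coord n c}"
    then show "c \<in> (\<lambda>(i,j). Y i j) ` ({..n}\<times>{..n}) \<union> (\<lambda>(i,j). Z i j) ` ({..n}\<times>{..n})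
      \<union> Zup ` {..n} \<union> Zdn ` {..n} \<union> {Zlast}"
      by (cases c) (auto simp: valid_coord_def)
  qed
qed auto

theorem theorem7p8:
  fixes n :: nat and lam :: "nat \<Rightarrow> real" and x :: "coord \<Rightarrow> real"
  assumes "n \<ge> 2"
    and "is_vertex (tweaked_GT n lam) x"
  shows "\<forall>c. valid_coord n c \<longrightarrow> x c \<in> Gamma_lat n lam"
proof (rule ccontr)
  assume "\<not> ?thesis"
  then obtain c0 where c0: "valid_coord n c0" "x c0 \<notin> Gamma_lat n lam" by blast
  have xin: "x \<in> tweaked_GT n lam" using assms(2) unfolding is_vertex_def by blast
  note X = xin[unfolded tweaked_GT_def mem_Collect_eq]
  have x0: "\<And>c. \<not> valid_coord n c \<Longrightarrow> x c = 0" using X by blast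
  have T1: "\<forall>i j. 1 \<le> i \<and> i \<le> n - 2 \<and> i \<le> j \<and> j \<le> n - 2 \<longrightarrow>
        x (Z i j) \<le> yv lam x i j \<and>
        x (Z i j) \<ge> yv lam x i (j + 1) \<and>
        x (Z i j) \<ge> yv lam x (i + 1) (j + 1) \<and>
        (j \<ge> i + 1 \<longrightarrow> x (Z i j) \<le> yv lam x (i + 1) j)" using X by blast
  have T2: "\<forall>i. 1 \<le> i \<and> i \<le> n - 2 \<longrightarrow>
        max (yv lam x i n) (yv lam x (i + 1) n) \<le> x (Zup i) \<and>
        x (Zup i) \<le> yv lam x i (n - 1) \<and>
        x (Zup i) \<le> yv lam x i (n - 1) + yv lam x i n + yv lam x (i + 1) n \<and>
        max (yv lam x i n) (yv lam x (i + 1) n) \<le> x (Zdn i) \<and>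
        x (Zdn i) \<le> yv lam x (i + 1) (n - 1) \<and>
        x (Zdn i) \<le> yv lam x (i + 1) (n - 1) + yv lam x i n + yv lam x (i + 1) n \<and>
        yv lam x i (n - 1) - yv lam x (i + 1) (n - 1) = x (Zup i) - x (Zdn i)" using X by blast
  have T3: "max (yv lam x (n - 1) n) (yv lam x n n) \<le> x Zlast \<and>
     x Zlast \<le> yv lam x (n - 1) (n - 1) \<and>
     x Zlast \<le> yv lam x (n - 1) (n - 1) + yv lam x (n - 1) n + yv lam x n n" using X by blast
  have G0: "0 \<in> Gamma_lat n lam" by (rule Gamma_zero)
  have xG0: "x c \<in> Gamma_lat n lam" if "\<not> valid_coord n c" for c using x0[OF that] G0 by simp
  obtain c1 where c1v: "valid_coord n c1" and c1G: "x c1 \<notin> Gamma_lat n lam"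
    and c1k: "(\<exists>i j. c1 = Y i j \<or> c1 = Z i j) \<or>
       (((\<exists>i. c1 = Zup i) \<or> c1 = Zlast) \<and> (\<forall>i j. x (Y i j) \<in> Gamma_lat n lam \<and> x (Z i j) \<in> Gamma_lat n lam))"
  proof (cases "\<exists>c. (\<exists>i j. c = Y i j \<or> c = Z i j) \<and> x c \<notin> Gamma_lat n lam")
    case True
    then obtain c where "(\<exists>i j. c = Y i j \<or> c = Z i j)" "x c \<notin> Gamma_lat n lam" by blast
    moreover then have "valid_coord n c" using xG0 by blast
    ultimately show ?thesis using that by blast
  next
    case False
    then have allG: "\<forall>i j. x (Y i j) \<in> Gamma_lat n lam \<and> x (Z i j) \<in> Gamma_lat n lam" by blast
    have yvG: "yv lam x i j \<in> Gamma_lat n lam" if "i \<noteq> 1 \<or> (1 \<le> j \<and> j \<le> n)" for i j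
      using that allG Gamma_lam[of j n lam] unfolding yv_def by auto
    show ?thesis
    proof (cases c0)
      case (Y i j) then show ?thesis using False c0 by blast
    next
      case (Z i j) then show ?thesis using False c0 by blast
    next
      case (Zup i) then show ?thesis using c0 allG that by blast
    next
      case Zlast then show ?thesis using c0 allG that by blast
    next
      case (Zdn i)
      then have i: "1 \<le> i" "i \<le> n - 2" using c0 by (auto simp: valid_coord_def)
      have eq: "yv lam x i (n - 1) - yv lam x (i + 1) (n - 1) = x (Zup i) - x (Zdn i)"
        using T2 i by blast
      have p: "yv lam x i (n - 1) \<in> Gamma_lat n lam" "yv lam x (i+1) (n - 1) \<in> Gamma_lat n lam"
        using assms(1) by (auto intro!: yvG)
      have "x (Zup i) \<notin> Gamma_lat n lam"
      proof
        assume "x (Zup i) \<in> Gamma_lat n lam"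
        then have "x (Zup i) - (yv lam x i (n - 1) - yv lam x (i + 1) (n - 1)) \<in> Gamma_lat n lam"
          using p by (intro Gamma_diff)
        then show False using eq c0 Zdn by simp
      qed
      moreover have "valid_coord n (Zup i)" using i by (simp add: valid_coord_def)
      ultimately show ?thesis using that allG by blast
    qed
  qed
  define r where "r = x c1"
  have r0: "r \<noteq> 0" using c1G G0 r_def by auto
  define G where "G = gfun r"
  have GG: "G u = 0" if "u \<in> Gamma_lat n lam" for u
  proof -
    have "u \<noteq> r" using that c1G r_def by auto
    moreover have "u \<noteq> - r" using Gamma_neg[OF that] c1G r_def by auto
    ultimately show ?thesis unfolding G_def gfun_def by simp
  qed
  have Godd: "G (- u) = - G u" for u unfolding G_def using gfun_odd[OF r0] .
  have Gb: "\<bar>G u\<bar> \<le> 1" for u unfolding G_def by (rule gfun_bound)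
  have Gr: "G r = 1" unfolding G_def gfun_def by simp
  define dsu where "dsu i = blockd G (x (Zup i)) (x (Zdn i)) (yv lam x i n) (yv lam x (i+1) n)
      (yv lam x i (n-1)) (yv lam x (i+1) (n-1))" for i
  define dl where "dl = blockd G (x Zlast) (x Zlast) (yv lam x (n-1) n) (yv lam x n n)
      (yv lam x (n-1) (n-1)) (yv lam x (n-1) (n-1))"
  define d where "d c = (case c of Y i j \<Rightarrow> G (x c) | Z i j \<Rightarrow> G (x c)
      | Zup i \<Rightarrow> (if 1 \<le> i \<and> i \<le> n - 2 then dsu i else 0)
      | Zdn i \<Rightarrow> (if 1 \<le> i \<and> i \<le> n - 2 then dsu i - G (yv lam x i (n-1)) + G (yv lam x (i+1) (n-1)) else 0)
      | Zlast \<Rightarrow> dl)" for c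
  have dsub: "\<bar>dsu i\<bar> \<le> 3" for i unfolding dsu_def by (rule blockd_bound[OF Gb])
  have dsub5: "\<bar>dsu i\<bar> \<le> 5" for i using dsub[of i] by linarith
  have dlb: "\<bar>dl\<bar> \<le> 3" unfolding dl_def by (rule blockd_bound[OF Gb])
  have db: "\<bar>d c\<bar> \<le> 5" for c
  proof (cases c)
    case (Zdn i)
    have "\<bar>dsu i - G (yv lam x i (n-1)) + G (yv lam x (i+1) (n-1))\<bar> \<le> 5"
      using dsub[of i] Gb[of "yv lam x i (n-1)"] Gb[of "yv lam x (i+1) (n-1)"] by linarith
    then show ?thesis using Zdn unfolding d_def by auto
  qed (use Gb[of "x c"] dsub5 dlb in \<open>auto simp: d_def\<close>)
  have dc1: "d c1 \<noteq> 0"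
  proof -
    consider (a) "\<exists>i j. c1 = Y i j \<or> c1 = Z i j"
      | (b) "(\<exists>i. c1 = Zup i) \<or> c1 = Zlast" "\<forall>i j. x (Y i j) \<in> Gamma_lat n lam \<and> x (Z i j) \<in> Gamma_lat n lam"
      using c1k by blast
    then show ?thesis
    proof cases
      case a then show ?thesis using Gr r_def unfolding d_def by auto
    next
      case b
      have yvG: "yv lam x i j \<in> Gamma_lat n lam" if "i \<noteq> 1 \<or> (1 \<le> j \<and> j \<le> n)" for i j
        using that b(2) Gamma_lam[of j n lam] unfolding yv_def by auto
      from b(1) show ?thesis
      proof
        assume "\<exists>i. c1 = Zup i"
        then obtain i where ci: "c1 = Zup i" by blast
        then have i: "1 \<le> i" "i \<le> n - 2" using c1v by (auto simp: valid_coord_def)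
        have eq: "yv lam x i (n - 1) - yv lam x (i + 1) (n - 1) = x (Zup i) - x (Zdn i)"
          using T2 i by blast
        have "dsu i = G (x (Zup i))" unfolding dsu_def
          by (rule blockd_gamma[OF yvG yvG yvG yvG]) (use assms(1) c1G ci eq in auto)
        then show ?thesis using i ci Gr r_def unfolding d_def by auto
      next
        assume ci: "c1 = Zlast"
        have "dl = G (x Zlast)" unfolding dl_def
          by (rule blockd_gamma[OF yvG yvG yvG yvG]) (use assms(1) c1G ci in auto)
        then show ?thesis using ci Gr r_def unfolding d_def by auto
      qed
    qed
  qed
  define V where "V = x ` {c. valid_coord n c} \<union> lam ` {1..n} \<union> {0}"
  have fV: "finite V" unfolding V_def using finite_valid by auto
  have xV: "x c \<in> V" for c using x0[of c] unfolding V_def by (cases "valid_coord n c") auto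
  have yvV: "yv lam x i j \<in> V" if "i \<noteq> 1 \<or> (1 \<le> j \<and> j \<le> n)" for i j
    using that xV unfolding yv_def V_def by auto
  have V0: "0 \<in> V" unfolding V_def by auto
  obtain \<delta> where dpos: "\<delta> > 0" and SLd: "SL \<delta> V" using SL_exists[OF fV] by blast
  have pert: "(\<lambda>c. x c + e * d c) \<in> tweaked_GT n lam" if e: "\<bar>e\<bar> \<le> \<delta> / 40" for e
  proof -
    define x' where "x' = (\<lambda>c. x c + e * d c)"
    have Gb5: "\<bar>G u\<bar> \<le> 5" for u using Gb[of u] by linarith
    have yv': "yv lam x' i j = yv lam x i j + e * G (yv lam x i j)" if "i \<noteq> 1 \<or> (1 \<le> j \<and> j \<le> n)" for i j
    proof (cases "i = 1")
      case True then have "G (lam j) = 0" using that Gamma_lam GG by auto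
      then show ?thesis using True by (simp add: yv_def)
    next
      case False then show ?thesis by (simp add: yv_def x'_def d_def)
    qed
    have xZ': "x' (Z i j) = x (Z i j) + e * G (x (Z i j))" for i j by (simp add: x'_def d_def)
    have P2: "A + e * G A \<le> B + e * G B" if "A \<in> V" "B \<in> V" "A \<le> B" for A B
      by (rule pert2[OF SLd dpos that(1,2) V0 that(3)]) (use Gb5 e in auto)
    have part0: "\<forall>c. \<not> valid_coord n c \<longrightarrow> x' c = 0"
    proof (intro allI impI)
      fix c assume nv: "\<not> valid_coord n c"
      show "x' c = 0" using nv x0[OF nv] GG[OF G0]
        by (cases c) (auto simp: x'_def d_def valid_coord_def)
    qed
    have part1: "\<forall>i j. 1 \<le> i \<and> i \<le> n - 2 \<and> i \<le> j \<and> j \<le> n - 2 \<longrightarrow>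
        x' (Z i j) \<le> yv lam x' i j \<and>
        x' (Z i j) \<ge> yv lam x' i (j + 1) \<and>
        x' (Z i j) \<ge> yv lam x' (i + 1) (j + 1) \<and>
        (j \<ge> i + 1 \<longrightarrow> x' (Z i j) \<le> yv lam x' (i + 1) j)"
    proof (intro allI impI)
      fix i j assume ij: "1 \<le> i \<and> i \<le> n - 2 \<and> i \<le> j \<and> j \<le> n - 2"
      have h: "x (Z i j) \<le> yv lam x i j" "x (Z i j) \<ge> yv lam x i (j + 1)"
        "x (Z i j) \<ge> yv lam x (i + 1) (j + 1)" "j \<ge> i + 1 \<Longrightarrow> x (Z i j) \<le> yv lam x (i + 1) j"
        using T1 ij by blast+
      have c1: "i \<noteq> 1 \<or> (1 \<le> j \<and> j \<le> n)" "i \<noteq> 1 \<or> (1 \<le> j + 1 \<and> j + 1 \<le> n)"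
        "i + 1 \<noteq> 1 \<or> (1 \<le> j + 1 \<and> j + 1 \<le> n)" "i + 1 \<noteq> 1 \<or> (1 \<le> j \<and> j \<le> n)"
        using ij by auto
      show "x' (Z i j) \<le> yv lam x' i j \<and>
        x' (Z i j) \<ge> yv lam x' i (j + 1) \<and>
        x' (Z i j) \<ge> yv lam x' (i + 1) (j + 1) \<and>
        (j \<ge> i + 1 \<longrightarrow> x' (Z i j) \<le> yv lam x' (i + 1) j)"
        unfolding xZ' yv'[OF c1(1)] yv'[OF c1(2)] yv'[OF c1(3)] yv'[OF c1(4)]
        using P2[OF xV yvV[OF c1(1)] h(1)] P2[OF yvV[OF c1(2)] xV h(2)]
          P2[OF yvV[OF c1(3)] xV h(3)] P2[OF xV yvV[OF c1(4)] h(4)] by blast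
    qed
    have part2: "\<forall>i. 1 \<le> i \<and> i \<le> n - 2 \<longrightarrow>
        max (yv lam x' i n) (yv lam x' (i + 1) n) \<le> x' (Zup i) \<and>
        x' (Zup i) \<le> yv lam x' i (n - 1) \<and>
        x' (Zup i) \<le> yv lam x' i (n - 1) + yv lam x' i n + yv lam x' (i + 1) n \<and>
        max (yv lam x' i n) (yv lam x' (i + 1) n) \<le> x' (Zdn i) \<and>
        x' (Zdn i) \<le> yv lam x' (i + 1) (n - 1) \<and>
        x' (Zdn i) \<le> yv lam x' (i + 1) (n - 1) + yv lam x' i n + yv lam x' (i + 1) n \<and>
        yv lam x' i (n - 1) - yv lam x' (i + 1) (n - 1) = x' (Zup i) - x' (Zdn i)"
    proof (intro allI impI)
      fix i assume i: "1 \<le> i \<and> i \<le> n - 2"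
      define s where "s = x (Zup i)"
      define t where "t = x (Zdn i)"
      define a where "a = yv lam x i n"
      define b where "b = yv lam x (i + 1) n"
      define p where "p = yv lam x i (n - 1)"
      define q where "q = yv lam x (i + 1) (n - 1)"
      define ds where "ds = blockd G s t a b p q"
      have h: "max a b \<le> s" "s \<le> p" "s \<le> p + a + b" "max a b \<le> t" "t \<le> q" "t \<le> q + a + b"
        "p - q = s - t"
        using T2 i unfolding s_def t_def a_def b_def p_def q_def by blast+
      have cc: "i \<noteq> 1 \<or> (1 \<le> n \<and> n \<le> n)" "i + 1 \<noteq> 1 \<or> (1 \<le> n \<and> n \<le> n)"
        "i \<noteq> 1 \<or> (1 \<le> n - 1 \<and> n - 1 \<le> n)" "i + 1 \<noteq> 1 \<or> (1 \<le> n - 1 \<and> n - 1 \<le> n)"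
        using assms(1) by auto
      have Vs: "s \<in> V" "t \<in> V" "a \<in> V" "b \<in> V" "p \<in> V" "q \<in> V"
        unfolding s_def t_def a_def b_def p_def q_def using xV yvV[OF cc(1)] yvV[OF cc(2)]
          yvV[OF cc(3)] yvV[OF cc(4)] by auto
      have ab: "a \<le> s" "b \<le> s" "a \<le> t" "b \<le> t" using h by auto
      have tight: "(s = a \<longrightarrow> ds = G a) \<and> (s = b \<longrightarrow> ds = G b) \<and> (s = p \<longrightarrow> ds = G p) \<and>
         (s = p + a + b \<longrightarrow> ds = G p + G a + G b) \<and>
         (t = a \<longrightarrow> ds - G p + G q = G a) \<and> (t = b \<longrightarrow> ds - G p + G q = G b) \<and>
         (t = q \<longrightarrow> ds - G p + G q = G q) \<and> (t = q + a + b \<longrightarrow> ds - G p + G q = G q + G a + G b)"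
        unfolding ds_def by (rule blockd_tight[where g=G and a=a and s=s and b=b and p=p and t=t and q=q, OF Godd ab(1,2) h(2,3) ab(3,4) h(5,6,7)])
      have dsb: "\<bar>ds\<bar> \<le> 5" using dsub5[of i] unfolding ds_def dsu_def s_def t_def a_def b_def p_def q_def .
      have dtb: "\<bar>ds - G p + G q\<bar> \<le> 5"
        using dsub[of i] Gb[of p] Gb[of q] unfolding ds_def dsu_def s_def t_def a_def b_def p_def q_def
        by linarith
      have xs: "x' (Zup i) = s + e * ds" "x' (Zdn i) = t + e * (ds - G p + G q)"
        using i unfolding x'_def d_def dsu_def ds_def s_def t_def a_def b_def p_def q_def by auto
      have ys: "yv lam x' i n = a + e * G a" "yv lam x' (i + 1) n = b + e * G b"
        "yv lam x' i (n - 1) = p + e * G p" "yv lam x' (i + 1) (n - 1) = q + e * G q"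
        unfolding a_def b_def p_def q_def using yv'[OF cc(1)] yv'[OF cc(2)] yv'[OF cc(3)] yv'[OF cc(4)]
        by auto
      have r1: "a + e * G a \<le> s + e * ds"
        by (rule pert2[OF SLd dpos Vs(3,1) V0 ab(1)]) (use tight Gb5 dsb e in auto)
      have r2: "b + e * G b \<le> s + e * ds"
        by (rule pert2[OF SLd dpos Vs(4,1) V0 ab(2)]) (use tight Gb5 dsb e in auto)
      have r3: "s + e * ds \<le> p + e * G p"
        by (rule pert2[OF SLd dpos Vs(1,5) V0 h(2)]) (use tight Gb5 dsb e in auto)
      have r4: "s + e * ds \<le> (p + e * G p) + (a + e * G a) + (b + e * G b)"
        by (rule pert3[OF SLd dpos Vs(1,5,3,4) h(3)]) (use tight Gb5 dsb e in auto)
      have r5: "a + e * G a \<le> t + e * (ds - G p + G q)"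
        by (rule pert2[OF SLd dpos Vs(3,2) V0 ab(3)]) (use tight Gb5 dtb e in auto)
      have r6: "b + e * G b \<le> t + e * (ds - G p + G q)"
        by (rule pert2[OF SLd dpos Vs(4,2) V0 ab(4)]) (use tight Gb5 dtb e in auto)
      have r7: "t + e * (ds - G p + G q) \<le> q + e * G q"
        by (rule pert2[OF SLd dpos Vs(2,6) V0 h(5)]) (use tight Gb5 dtb e in auto)
      have r8: "t + e * (ds - G p + G q) \<le> (q + e * G q) + (a + e * G a) + (b + e * G b)"
        by (rule pert3[OF SLd dpos Vs(2,6,3,4) h(6)]) (use tight Gb5 dtb e in auto)
      have r9: "(p + e * G p) - (q + e * G q) = (s + e * ds) - (t + e * (ds - G p + G q))"
        using h(7) by (simp add: algebra_simps)
      show "max (yv lam x' i n) (yv lam x' (i + 1) n) \<le> x' (Zup i) \<and>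
        x' (Zup i) \<le> yv lam x' i (n - 1) \<and>
        x' (Zup i) \<le> yv lam x' i (n - 1) + yv lam x' i n + yv lam x' (i + 1) n \<and>
        max (yv lam x' i n) (yv lam x' (i + 1) n) \<le> x' (Zdn i) \<and>
        x' (Zdn i) \<le> yv lam x' (i + 1) (n - 1) \<and>
        x' (Zdn i) \<le> yv lam x' (i + 1) (n - 1) + yv lam x' i n + yv lam x' (i + 1) n \<and>
        yv lam x' i (n - 1) - yv lam x' (i + 1) (n - 1) = x' (Zup i) - x' (Zdn i)"
        unfolding xs ys using r1 r2 r3 r4 r5 r6 r7 r8 r9 by simp
    qed
    have part3: "max (yv lam x' (n - 1) n) (yv lam x' n n) \<le> x' Zlast \<and>
     x' Zlast \<le> yv lam x' (n - 1) (n - 1) \<and>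
     x' Zlast \<le> yv lam x' (n - 1) (n - 1) + yv lam x' (n - 1) n + yv lam x' n n"
    proof -
      define s where "s = x Zlast"
      define a where "a = yv lam x (n - 1) n"
      define b where "b = yv lam x n n"
      define p where "p = yv lam x (n - 1) (n - 1)"
      define ds where "ds = blockd G s s a b p p"
      have h: "max a b \<le> s" "s \<le> p" "s \<le> p + a + b"
        using T3 unfolding s_def a_def b_def p_def by blast+
      have cc: "n - 1 \<noteq> 1 \<or> (1 \<le> n \<and> n \<le> n)" "n \<noteq> 1 \<or> (1 \<le> n \<and> n \<le> n)"
        "n - 1 \<noteq> 1 \<or> (1 \<le> n - 1 \<and> n - 1 \<le> n)"
        using assms(1) by auto
      have Vs: "s \<in> V" "a \<in> V" "b \<in> V" "p \<in> V"
        unfolding s_def a_def b_def p_def using xV yvV[OF cc(1)] yvV[OF cc(2)] yvV[OF cc(3)] by auto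
      have ab: "a \<le> s" "b \<le> s" using h by auto
      have tight: "(s = a \<longrightarrow> ds = G a) \<and> (s = b \<longrightarrow> ds = G b) \<and> (s = p \<longrightarrow> ds = G p) \<and>
         (s = p + a + b \<longrightarrow> ds = G p + G a + G b)"
        using blockd_tight[where g=G and a=a and s=s and b=b and p=p and t=s and q=p, OF Godd ab(1,2) h(2,3) ab(1,2) h(2,3)] unfolding ds_def by simp
      have dsb: "\<bar>ds\<bar> \<le> 5" using dlb unfolding ds_def dl_def s_def a_def b_def p_def by linarith
      have xs: "x' Zlast = s + e * ds"
        unfolding x'_def d_def dl_def ds_def s_def a_def b_def p_def by auto
      have ys: "yv lam x' (n - 1) n = a + e * G a" "yv lam x' n n = b + e * G b"
        "yv lam x' (n - 1) (n - 1) = p + e * G p"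
        unfolding a_def b_def p_def using yv'[OF cc(1)] yv'[OF cc(2)] yv'[OF cc(3)] by auto
      have r1: "a + e * G a \<le> s + e * ds"
        by (rule pert2[OF SLd dpos Vs(2,1) V0 ab(1)]) (use tight Gb5 dsb e in auto)
      have r2: "b + e * G b \<le> s + e * ds"
        by (rule pert2[OF SLd dpos Vs(3,1) V0 ab(2)]) (use tight Gb5 dsb e in auto)
      have r3: "s + e * ds \<le> p + e * G p"
        by (rule pert2[OF SLd dpos Vs(1,4) V0 h(2)]) (use tight Gb5 dsb e in auto)
      have r4: "s + e * ds \<le> (p + e * G p) + (a + e * G a) + (b + e * G b)"
        by (rule pert3[OF SLd dpos Vs(1,4,2,3) h(3)]) (use tight Gb5 dsb e in auto)
      show ?thesis unfolding xs ys using r1 r2 r3 r4 by simp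
    qed
    have "x' \<in> tweaked_GT n lam" unfolding tweaked_GT_def mem_Collect_eq
      using part0 part1 part2 part3 by blast
    then show ?thesis by (simp add: x'_def)
  qed
  define a where "a = (\<lambda>c. x c + (- (\<delta>/40)) * d c)"
  define b where "b = (\<lambda>c. x c + (\<delta>/40) * d c)"
  have aP: "a \<in> tweaked_GT n lam" unfolding a_def by (rule pert) (use dpos in simp)
  have bP: "b \<in> tweaked_GT n lam" unfolding b_def by (rule pert) (use dpos in simp)
  have "a c1 \<noteq> b c1" unfolding a_def b_def using dc1 dpos by auto
  then have ab: "a \<noteq> b" by auto
  have xeq: "x = (\<lambda>c. (1 - 1/2) * a c + (1/2) * b c)" unfolding a_def b_def by (auto simp: algebra_simps)
  have "\<exists>a'\<in>tweaked_GT n lam. \<exists>b'\<in>tweaked_GT n lam. a' \<noteq> b' \<and>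
      (\<exists>t::real. 0 < t \<and> t < 1 \<and> x = (\<lambda>c. (1 - t) * a' c + t * b' c))"
    using aP bP ab xeq by (intro bexI[of _ a] bexI[of _ b] conjI exI[of _ "1/2"]) auto
  then show False using assms(2) unfolding is_vertex_def by blast
qed

end
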